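(* Let $\eta_1,\eta_2,\dots$ be iid with $\Pr(\eta_1\le x)=e^x$, $x\le0$, and let $1\le j<k<r$ be integers. Then for all $x_1<x_2<x_3\le 0$, \[ \Pr(\eta_j\le x_1,\eta_k\le x_2,\eta_r\le x_3\mid \eta_j,\eta_k,\eta_r\text{ are records}) =\frac{kr}{(k-j)(r-k)}\left(e^{jx_1}\Big(e^{(r-k)x_3}e^{(k-j)x_2}-\frac{k-j}{r-j}e^{(r-j)x_2}\Big)-\frac{j}{k}e^{kx_1}e^{(r-k)x_3}+\frac{j(k-j)}{r(r-j)}e^{rx_1}\right). \]
   Context: $\eta_m$ is a record if $\eta_m>\max(\eta_1,\dots,\eta_{m-1})$; $\eta_1$ is always a record. *)

theory Defs
  imports "HOL-Probability.Probability"
begin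

text \<open>The sequence is indexed from 1: eta 1, eta 2, ...  Index m is a record
  at outcome w iff eta m w exceeds all earlier values eta 1 w, ..., eta (m-1) w
  (vacuous for m = 1).\<close>
definition is_record :: "(nat \<Rightarrow> 'a \<Rightarrow> real) \<Rightarrow> nat \<Rightarrow> 'a \<Rightarrow> bool" where
  "is_record \<eta> m \<omega> \<longleftrightarrow> (\<forall>i\<in>{1..<m}. \<eta> i \<omega> < \<eta> m \<omega>)"

end

theory Submission
  imports Defs
begin


lemma pint: "u \<le> w \<Longrightarrow> ((\<lambda>v::real. v^n) has_integral (w^Suc n - u^Suc n)/Suc n) {u..w}"
proof -
  assume "u \<le> w"
  have "((\<lambda>v::real. v^n) has_integral ((\<lambda>v. v^Suc n / Suc n) w - (\<lambda>v. v^Suc n / Suc n) u)) {u..w}"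
  proof (rule fundamental_theorem_of_calculus[OF \<open>u \<le> w\<close>])
    fix x :: real
    have "((\<lambda>v. v^Suc n / Suc n) has_real_derivative (real (Suc n) * x ^ (Suc n - Suc 0)) / Suc n) (at x within {u..w})"
      by (intro DERIV_cdivide DERIV_pow)
    then have "((\<lambda>v. v^Suc n / Suc n) has_real_derivative x^n) (at x within {u..w})"
      by (simp del: of_nat_Suc)
    then show "((\<lambda>v. v^Suc n / Suc n) has_vector_derivative x^n) (at x within {u..w})"
      by (simp add: has_real_derivative_iff_has_vector_derivative)
  qed
  then show ?thesis by (simp add: diff_divide_distrib)
qed

definition H :: "real \<Rightarrow> nat \<Rightarrow> nat \<Rightarrow> real \<Rightarrow> real" where
  "H a j k z = (if z \<le> a then z^k/(j*k) else a^k/(j*k) + a^j*(z^(k-j) - a^(k-j))/(j*(k-j)))"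

lemma H_ge: "a \<le> z \<Longrightarrow> H a j k z = a^k/(j*k) + a^j*(z^(k-j) - a^(k-j))/(j*(k-j))"
  unfolding H_def by auto

lemma Hint:
  assumes "1 \<le> j" "j < k" "0 < a" "0 \<le> z"
  shows "((\<lambda>v. min a v ^ j / j * v^(k-1-j)) has_integral H a j k z) {0..z}"
proof (cases "z \<le> a")
  case True
  have "((\<lambda>v. v^(k-1) * (1/j)) has_integral ((z^Suc (k-1) - 0^Suc (k-1))/Suc (k-1)) * (1/j)) {0..z}"
    by (intro has_integral_mult_left pint) fact
  moreover have "Suc (k-1) = k" using assms by simp
  moreover have "((z^k - 0^k)/k) * (1/j) = H a j k z"
    using True assms by (simp add: H_def zero_power)
  ultimately have "((\<lambda>v. v^(k-1) * (1/j)) has_integral H a j k z) {0..z}"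
    by metis
  then show ?thesis
  proof (rule has_integral_eq[rotated])
    fix v assume "v \<in> {0..z}"
    then have "min a v = v" using True by auto
    moreover have "v^j * v^(k-1-j) = v^(k-1)" using assms by (simp add: power_add[symmetric])
    ultimately show "v^(k-1) * (1/j) = min a v ^ j / j * v^(k-1-j)" by (simp add: field_simps)
  qed
next
  case False
  have i1: "((\<lambda>v. min a v ^ j / j * v^(k-1-j)) has_integral H a j k a) {0..a}"
  proof -
    have "((\<lambda>v. v^(k-1) * (1/j)) has_integral ((a^Suc (k-1) - 0^Suc (k-1))/Suc (k-1)) * (1/j)) {0..a}"
      using assms by (intro has_integral_mult_left pint) simp
    moreover have "Suc (k-1) = k" using assms by simp
    moreover have "((a^k - 0^k)/k) * (1/j) = H a j k a"
      using assms by (simp add: H_def zero_power)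
    ultimately have "((\<lambda>v. v^(k-1) * (1/j)) has_integral H a j k a) {0..a}"
      by metis
    then show ?thesis
    proof (rule has_integral_eq[rotated])
      fix v assume "v \<in> {0..a}"
      then have "min a v = v" by auto
      moreover have "v^j * v^(k-1-j) = v^(k-1)" using assms by (simp add: power_add[symmetric])
      ultimately show "v^(k-1) * (1/j) = min a v ^ j / j * v^(k-1-j)" by (simp add: field_simps)
    qed
  qed
  have i2: "((\<lambda>v. min a v ^ j / j * v^(k-1-j)) has_integral a^j/j * ((z^(k-j) - a^(k-j))/(k-j))) {a..z}"
  proof -
    have "((\<lambda>v. a^j/j * v^(k-1-j)) has_integral a^j/j * ((z^Suc (k-1-j) - a^Suc (k-1-j))/Suc (k-1-j))) {a..z}"
      using False by (intro has_integral_mult_right pint) simp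
    moreover have "Suc (k-1-j) = k - j" using assms by simp
    ultimately have "((\<lambda>v. a^j/j * v^(k-1-j)) has_integral a^j/j * ((z^(k-j) - a^(k-j))/(k-j))) {a..z}"
      using assms by (simp only: of_nat_diff[symmetric])
    then show ?thesis
      by (rule has_integral_eq[rotated]) auto
  qed
  have "((\<lambda>v. min a v ^ j / j * v^(k-1-j)) has_integral (H a j k a + a^j/j * ((z^(k-j) - a^(k-j))/(k-j)))) {0..z}"
    using False assms by (intro has_integral_combine[OF _ _ i1 i2]) auto
  moreover have "H a j k a + a^j/j * ((z^(k-j) - a^(k-j))/(k-j)) = H a j k z"
    using False assms by (simp add: H_def field_simps)
  ultimately show ?thesis by simp
qed

definition Fin :: "nat \<Rightarrow> nat \<Rightarrow> nat \<Rightarrow> real \<Rightarrow> real \<Rightarrow> real \<Rightarrow> real" where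
  "Fin j k r a b c = a^r/(j*k*r)
     + (a^k/(j*k) - a^k/(j*(k-j))) * ((b^(r-k)-a^(r-k))/(r-k))
     + a^j/(j*(k-j)) * ((b^(r-j)-a^(r-j))/(r-j))
     + H a j k b * ((c^(r-k)-b^(r-k))/(r-k))"

lemma pint': "u \<le> w \<Longrightarrow> 0 < m \<Longrightarrow> ((\<lambda>v::real. v^(m-1)) has_integral (w^m - u^m)/m) {u..w}"
  using pint[of u w "m-1"] by simp

lemma Fint:
  assumes "1 \<le> j" "j < k" "k < r" "0 < a" "a \<le> b" "b \<le> c"
  shows "((\<lambda>v. H a j k (min b v) * v^(r-1-k)) has_integral Fin j k r a b c) {0..c}"
proof -
  have e1: "r - 1 - k = r - k - 1" by simp
  have p1: "((\<lambda>v. H a j k (min b v) * v^(r-1-k)) has_integral a^r/(j*k*r)) {0..a}"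
  proof -
    have "((\<lambda>v. v^(r-1) * (1/(j*k))) has_integral ((a^r - 0^r)/r) * (1/(j*k))) {0..a}"
      using assms by (intro has_integral_mult_left pint') auto
    moreover have "((a^r - 0^r)/r) * (1/(j*k)) = a^r/(j*k*r)"
      using assms by (simp add: zero_power)
    ultimately have "((\<lambda>v. v^(r-1) * (1/(j*k))) has_integral a^r/(j*k*r)) {0..a}" by metis
    then show ?thesis
    proof (rule has_integral_eq[rotated])
      fix v assume v: "v \<in> {0..a}"
      then have "min b v = v" "v \<le> a" using assms by auto
      moreover have "v^k * v^(r-1-k) = v^(r-1)" using assms by (simp add: power_add[symmetric])
      ultimately show "v^(r-1) * (1/(j*k)) = H a j k (min b v) * v^(r-1-k)"
        by (simp add: H_def field_simps)
    qed
  qed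
  have p2: "((\<lambda>v. H a j k (min b v) * v^(r-1-k)) has_integral
      (a^k/(j*k) - a^k/(j*(k-j))) * ((b^(r-k)-a^(r-k))/(r-k)) + a^j/(j*(k-j)) * ((b^(r-j)-a^(r-j))/(r-j))) {a..b}"
  proof -
    have "((\<lambda>v. (a^k/(j*k) - a^k/(j*(k-j))) * v^(r-k-1) + a^j/(j*(k-j)) * v^(r-j-1)) has_integral
      (a^k/(j*k) - a^k/(j*(k-j))) * ((b^(r-k)-a^(r-k))/(r-k)) + a^j/(j*(k-j)) * ((b^(r-j)-a^(r-j))/(r-j))) {a..b}"
      using assms by (intro has_integral_add has_integral_mult_right pint') auto
    then show ?thesis
    proof (rule has_integral_eq[rotated])
      fix v assume v: "v \<in> {a..b}"
      then have m: "min b v = v" "a \<le> v" using assms by auto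
      have pw1: "v^(k-j) * v^(r-k-1) = v^(r-j-1)" using assms by (simp add: power_add[symmetric])
      have pw2: "a^j * a^(k-j) = a^k" using assms by (simp add: power_add[symmetric])
      have Hv: "H a j k v = a^k/(j*k) + a^j*(v^(k-j) - a^(k-j))/(j*(k-j))" by (rule H_ge) (use m in auto)
      show "(a^k/(j*k) - a^k/(j*(k-j))) * v^(r-k-1) + a^j/(j*(k-j)) * v^(r-j-1) = H a j k (min b v) * v^(r-1-k)"
        unfolding m e1 Hv pw1[symmetric] pw2[symmetric] by (simp add: algebra_simps diff_divide_distrib add_divide_distrib)
    qed
  qed
  have p3: "((\<lambda>v. H a j k (min b v) * v^(r-1-k)) has_integral H a j k b * ((c^(r-k)-b^(r-k))/(r-k))) {b..c}"
  proof -
    have "((\<lambda>v. H a j k b * v^(r-k-1)) has_integral H a j k b * ((c^(r-k)-b^(r-k))/(r-k))) {b..c}"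
      using assms by (intro has_integral_mult_right pint') auto
    then show ?thesis by (rule has_integral_eq[rotated]) (auto simp: e1)
  qed
  have "((\<lambda>v. H a j k (min b v) * v^(r-1-k)) has_integral a^r/(j*k*r) +
      ((a^k/(j*k) - a^k/(j*(k-j))) * ((b^(r-k)-a^(r-k))/(r-k)) + a^j/(j*(k-j)) * ((b^(r-j)-a^(r-j))/(r-j)))) {0..b}"
    using assms by (intro has_integral_combine[OF _ _ p1 p2]) auto
  from has_integral_combine[OF _ _ this p3] assms
  show ?thesis unfolding Fin_def by (simp add: add.assoc)
qed



lemma core_rec:
  fixes X V :: "'a \<Rightarrow> real"
  assumes "prob_space M"
    and ind: "prob_space.indep_var M borel X borel V"
    and dV: "distributed M lborel V (\<lambda>x. indicator {0..1} x / measure lborel {0..1::real})"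
    and I[measurable]: "I \<in> sets borel"
  shows "emeasure M {\<omega>\<in>space M. X \<omega> < V \<omega> \<and> V \<omega> \<in> I}
     = (\<integral>\<^sup>+ v. indicator ({0..1} \<inter> I) v * emeasure M {\<omega>\<in>space M. X \<omega> < v} \<partial>lborel)"
proof -
  interpret prob_space M by fact
  have rX[measurable]: "X \<in> borel_measurable M" and rV[measurable]: "V \<in> borel_measurable M"
    using indep_var_rv1[OF ind] indep_var_rv2[OF ind] by auto
  have eqd: "distr M borel X \<Otimes>\<^sub>M distr M borel V = distr M (borel \<Otimes>\<^sub>M borel) (\<lambda>x. (X x, V x))"
    using ind by (simp add: indep_var_distribution_eq)
  interpret PX: prob_space "distr M borel X" by (rule prob_space_distr) simp
  interpret PV: prob_space "distr M borel V" by (rule prob_space_distr) simp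
  interpret PP: pair_sigma_finite "distr M borel X" "distr M borel V" ..
  let ?A = "{p::real\<times>real. fst p < snd p \<and> snd p \<in> I}"
  have Ameas: "?A \<in> sets (borel \<Otimes>\<^sub>M borel)"
  proof -
    have "Measurable.pred (borel \<Otimes>\<^sub>M borel) (\<lambda>p::real\<times>real. fst p < snd p \<and> snd p \<in> I)"
      by measurable
    then show ?thesis by (simp add: pred_def space_pair_measure)
  qed
  have "emeasure M {\<omega>\<in>space M. X \<omega> < V \<omega> \<and> V \<omega> \<in> I}
      = emeasure (distr M (borel \<Otimes>\<^sub>M borel) (\<lambda>x. (X x, V x))) ?A"
    using Ameas by (subst emeasure_distr) (auto intro!: arg_cong[where f="emeasure M"])
  also have "\<dots> = emeasure (distr M borel X \<Otimes>\<^sub>M distr M borel V) ?A"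
    by (simp add: eqd)
  also have "\<dots> = (\<integral>\<^sup>+y. emeasure (distr M borel X) ((\<lambda>x. (x, y)) -` ?A) \<partial>distr M borel V)"
    using Ameas by (intro PP.emeasure_pair_measure_alt2) simp
  also have "\<dots> = (\<integral>\<^sup>+y. indicator I y * emeasure M {\<omega>\<in>space M. X \<omega> < y} \<partial>distr M borel V)"
  proof (rule nn_integral_cong)
    fix y
    show "emeasure (distr M borel X) ((\<lambda>x. (x, y)) -` ?A) = indicator I y * emeasure M {\<omega>\<in>space M. X \<omega> < y}"
      by (cases "y \<in> I") (auto simp: emeasure_distr vimage_def Int_def conj_commute)
  qed
  also have "distr M borel V = distr M lborel V"
    by (rule distr_cong) auto
  also have "\<dots> = density lborel (\<lambda>x. indicator {0..1} x / measure lborel {0..1::real})"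
    using dV by (simp add: distributed_distr_eq_density)
  also have "(\<integral>\<^sup>+y. indicator I y * emeasure M {\<omega>\<in>space M. X \<omega> < y} \<partial>\<dots>)
     = (\<integral>\<^sup>+y. (indicator {0..1} y / measure lborel {0..1::real}) * (indicator I y * emeasure M {\<omega>\<in>space M. X \<omega> < y}) \<partial>lborel)"
    by (rule nn_integral_density) auto
  also have "\<dots> = (\<integral>\<^sup>+ v. indicator ({0..1} \<inter> I) v * emeasure M {\<omega>\<in>space M. X \<omega> < v} \<partial>lborel)"
    by (intro nn_integral_cong) (auto simp: indicator_def)
  finally show ?thesis .
qed

lemma unif_lt:
  fixes V :: "'a \<Rightarrow> real"
  assumes "prob_space M"
    and dV: "distributed M lborel V (\<lambda>x. indicator {0..1} x / measure lborel {0..1::real})"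
    and y: "0 \<le> y" "y \<le> 1"
  shows "measure M {\<omega>\<in>space M. V \<omega> < y} = y"
proof -
  interpret prob_space M by fact
  have [measurable]: "V \<in> borel_measurable M" using dV by (simp add: distributed_def)
  have "emeasure M {\<omega>\<in>space M. V \<omega> < y} = emeasure (distr M lborel V) {..<y}"
    by (subst emeasure_distr) (auto intro!: arg_cong[where f="emeasure M"])
  also have "\<dots> = emeasure (density lborel (\<lambda>x. indicator {0..1} x / measure lborel {0..1::real})) {..<y}"
    using dV by (simp add: distributed_distr_eq_density)
  also have "\<dots> = (\<integral>\<^sup>+x. indicator {0..1} x * indicator {..<y} x \<partial>lborel)"
    by (subst emeasure_density) (auto intro!: nn_integral_cong simp: indicator_def)
  also have "\<dots> = (\<integral>\<^sup>+x. indicator {0..<y} x \<partial>lborel)"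
    using y by (intro nn_integral_cong) (auto simp: indicator_def)
  also have "\<dots> = ennreal y" using y by simp
  finally show ?thesis using y by (simp add: emeasure_eq_measure)
qed

lemma nonrec_step:
  fixes X V :: "'a \<Rightarrow> real"
  assumes "prob_space M"
    and ind: "prob_space.indep_var M borel X borel V"
    and dV: "distributed M lborel V (\<lambda>x. indicator {0..1} x / measure lborel {0..1::real})"
    and y: "0 \<le> y" "y \<le> 1"
  shows "measure M {\<omega>\<in>space M. X \<omega> < y \<and> V \<omega> < y} = measure M {\<omega>\<in>space M. X \<omega> < y} * y"
proof -
  interpret prob_space M by fact
  have "measure M {\<omega>\<in>space M. X \<omega> < y \<and> V \<omega> < y} = prob ((\<lambda>x. (X x, V x)) -` ({..<y} \<times> {..<y}) \<inter> space M)"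
    by (auto intro!: arg_cong[where f=prob])
  also have "\<dots> = prob (X -` {..<y} \<inter> space M) * prob (V -` {..<y} \<inter> space M)"
    by (rule indep_varD[OF ind]) auto
  also have "prob (V -` {..<y} \<inter> space M) = y"
    using unif_lt[OF \<open>prob_space M\<close> dV y] by (simp add: vimage_def Int_def conj_commute)
  finally show ?thesis by (simp add: vimage_def Int_def conj_commute)
qed

lemma rec_step:
  fixes X V :: "'a \<Rightarrow> real" and g :: "real \<Rightarrow> real"
  assumes "prob_space M"
    and ind: "prob_space.indep_var M borel X borel V"
    and dV: "distributed M lborel V (\<lambda>x. indicator {0..1} x / measure lborel {0..1::real})"
    and t: "0 \<le> t" "t \<le> 1" and y: "0 \<le> y"
    and gX: "\<And>v. 0 \<le> v \<Longrightarrow> v \<le> 1 \<Longrightarrow> measure M {\<omega>\<in>space M. X \<omega> < v} = g v"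
    and gi: "(g has_integral A) {0..min t y}"
  shows "measure M {\<omega>\<in>space M. X \<omega> < V \<omega> \<and> V \<omega> \<le> t \<and> V \<omega> < y} = A"
proof -
  interpret prob_space M by fact
  have g0: "\<And>v. 0 \<le> v \<Longrightarrow> v \<le> 1 \<Longrightarrow> 0 \<le> g v" using gX by (metis measure_nonneg)
  have "emeasure M {\<omega>\<in>space M. X \<omega> < V \<omega> \<and> V \<omega> \<le> t \<and> V \<omega> < y}
       = emeasure M {\<omega>\<in>space M. X \<omega> < V \<omega> \<and> V \<omega> \<in> {u. u \<le> t \<and> u < y}}" by simp
  also have "\<dots> = (\<integral>\<^sup>+ v. indicator ({0..1} \<inter> {u. u \<le> t \<and> u < y}) v * emeasure M {\<omega>\<in>space M. X \<omega> < v} \<partial>lborel)"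
    by (rule core_rec[OF assms(1) ind dV]) auto
  also have "\<dots> = (\<integral>\<^sup>+ v. ennreal (indicator {0..min t y} v * g v) \<partial>lborel)"
  proof (intro nn_integral_cong_AE eventually_mono[OF AE_lborel_singleton[of y]] impI)
    fix v :: real assume "v \<noteq> y"
    show "indicator ({0..1} \<inter> {u. u \<le> t \<and> u < y}) v * emeasure M {\<omega>\<in>space M. X \<omega> < v}
        = ennreal (indicator {0..min t y} v * g v)"
    proof (cases "0 \<le> v \<and> v \<le> min t y")
      case True
      then have "v \<le> 1" using t by auto
      then show ?thesis using True \<open>v \<noteq> y\<close> t gX[of v]
        by (auto simp: indicator_def emeasure_eq_measure)
    next
      case False
      then show ?thesis by (auto simp: indicator_def)
    qed
  qed
  also have "\<dots> = ennreal A"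
    using g0 t gi by (intro nn_integral_has_integral_lebesgue) auto
  finally have "emeasure M {\<omega>\<in>space M. X \<omega> < V \<omega> \<and> V \<omega> \<le> t \<and> V \<omega> < y} = ennreal A" .
  moreover have "0 \<le> A"
    using has_integral_nonneg[OF gi] g0 t by auto
  ultimately show ?thesis by (simp add: emeasure_eq_measure)
qed

primrec Smax :: "(nat \<Rightarrow> real) \<Rightarrow> nat \<Rightarrow> real" where
  "Smax x 0 = -1"
| "Smax x (Suc n) = max (Smax x n) (exp (x (Suc n)))"

definition rok :: "(nat \<Rightarrow> real) \<Rightarrow> nat \<Rightarrow> real \<Rightarrow> nat \<Rightarrow> bool" where
  "rok x m t n \<longleftrightarrow> (m \<le> n \<longrightarrow> Smax x (m - 1) < exp (x m) \<and> exp (x m) \<le> t)"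

lemma Smax_cong: "(\<And>i. 1 \<le> i \<Longrightarrow> i \<le> n \<Longrightarrow> x i = z i) \<Longrightarrow> Smax x n = Smax z n"
  by (induction n) auto

lemma rok_cong: "(\<And>i. 1 \<le> i \<Longrightarrow> i \<le> n \<Longrightarrow> x i = z i) \<Longrightarrow> 1 \<le> m \<Longrightarrow> rok x m t n = rok z m t n"
  unfolding rok_def using Smax_cong[of "m - 1" x z] by auto

lemma Smax_meas: "m \<le> n \<Longrightarrow> (\<lambda>x. Smax x m) \<in> borel_measurable (PiM {1..n} (\<lambda>_. borel))"
proof (induction m)
  case 0 then show ?case by simp
next
  case (Suc m)
  then have [measurable]: "(\<lambda>x. Smax x m) \<in> borel_measurable (PiM {1..n} (\<lambda>_. borel))" by simp
  have [measurable]: "(\<lambda>x. x (Suc m)) \<in> borel_measurable (PiM {1..n} (\<lambda>_. borel))"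
    using Suc.prems by (intro measurable_component_singleton) auto
  show ?case unfolding Smax.simps by measurable
qed

lemma rok_meas: "1 \<le> m \<Longrightarrow> Measurable.pred (PiM {1..n} (\<lambda>_. borel)) (\<lambda>x. rok x m t n)"
proof (cases "m \<le> n")
  case True
  assume "1 \<le> m"
  have [measurable]: "(\<lambda>x. Smax x (m - 1)) \<in> borel_measurable (PiM {1..n} (\<lambda>_. borel))"
    using True by (intro Smax_meas) auto
  have [measurable]: "(\<lambda>x. x m) \<in> borel_measurable (PiM {1..n} (\<lambda>_. borel))"
    using True \<open>1 \<le> m\<close> by (intro measurable_component_singleton) auto
  show ?thesis using True unfolding rok_def by measurable
next
  case False then show ?thesis unfolding rok_def by simp
qed

locale recsetup = prob_space M for M :: "'a measure" +
  fixes \<eta> :: "nat \<Rightarrow> 'a \<Rightarrow> real" and j k r :: nat and a b c :: real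
  assumes rv: "\<And>i. i \<ge> 1 \<Longrightarrow> \<eta> i \<in> borel_measurable M"
    and indep: "indep_vars (\<lambda>_. borel) \<eta> {1..}"
    and cdf: "\<And>i x. i \<ge> 1 \<Longrightarrow> x \<le> 0 \<Longrightarrow> measure M {\<omega> \<in> space M. \<eta> i \<omega> \<le> x} = exp x"
    and jkr: "1 \<le> j" "j < k" "k < r"
    and abc: "0 < a" "a \<le> b" "b \<le> c" "c \<le> 1"
begin

definition Ev :: "(nat \<Rightarrow> real) \<Rightarrow> nat \<Rightarrow> bool" where
  "Ev x n \<longleftrightarrow> rok x j a n \<and> rok x k b n \<and> rok x r c n"

definition G :: "nat \<Rightarrow> real \<Rightarrow> real" where
  "G n y = measure M {\<omega>\<in>space M. Ev (\<lambda>i. \<eta> i \<omega>) n \<and> Smax (\<lambda>i. \<eta> i \<omega>) n < y}"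

definition F :: "nat \<Rightarrow> (nat \<Rightarrow> real) \<Rightarrow> real" where
  "F n x = (if Ev x n then Smax x n else 2)"

lemma F_meas: "F n \<in> borel_measurable (PiM {1..n} (\<lambda>_. borel))"
proof -
  have [measurable]: "(\<lambda>x. Smax x n) \<in> borel_measurable (PiM {1..n} (\<lambda>_. borel))"
    by (rule Smax_meas) simp
  have [measurable]: "Measurable.pred (PiM {1..n} (\<lambda>_. borel)) (\<lambda>x. rok x j a n)"
    "Measurable.pred (PiM {1..n} (\<lambda>_. borel)) (\<lambda>x. rok x k b n)"
    "Measurable.pred (PiM {1..n} (\<lambda>_. borel)) (\<lambda>x. rok x r c n)"
    using rok_meas jkr by auto
  show ?thesis unfolding F_def Ev_def using jkr by measurable
qed

lemma F_restrict: "F n (restrict x {1..n}) = F n x"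
proof -
  have "Smax (restrict x {1..n}) n = Smax x n" by (rule Smax_cong) auto
  moreover have "rok (restrict x {1..n}) m t n = rok x m t n" if "1 \<le> m" for m t
    using that by (intro rok_cong) auto
  ultimately show ?thesis unfolding F_def Ev_def using jkr by simp
qed

lemma indep_step: "indep_var borel (\<lambda>\<omega>. F n (\<lambda>i. \<eta> i \<omega>)) borel (\<lambda>\<omega>. exp (\<eta> (Suc n) \<omega>))"
proof -
  have "indep_var (PiM {1..n} (\<lambda>_. borel)) (\<lambda>\<omega>. restrict (\<lambda>i. \<eta> i \<omega>) {1..n})
     (PiM {Suc n} (\<lambda>_. borel)) (\<lambda>\<omega>. restrict (\<lambda>i. \<eta> i \<omega>) {Suc n})"
    by (rule indep_var_restrict[OF indep]) auto
  moreover have "(\<lambda>x. exp (x (Suc n))) \<in> borel_measurable (PiM {Suc n} (\<lambda>_. borel::real measure))"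
  proof -
    have [measurable]: "(\<lambda>x. x (Suc n)) \<in> borel_measurable (PiM {Suc n} (\<lambda>_. borel::real measure))"
      by (intro measurable_component_singleton) auto
    show ?thesis by simp
  qed
  ultimately have "indep_var borel (F n \<circ> (\<lambda>\<omega>. restrict (\<lambda>i. \<eta> i \<omega>) {1..n}))
     borel ((\<lambda>x. exp (x (Suc n))) \<circ> (\<lambda>\<omega>. restrict (\<lambda>i. \<eta> i \<omega>) {Suc n}))"
    using F_meas by (intro indep_var_compose) auto
  then show ?thesis by (simp add: comp_def F_restrict[simplified])
qed

lemma distU: "1 \<le> i \<Longrightarrow> distributed M lborel (\<lambda>\<omega>. exp (\<eta> i \<omega>)) (\<lambda>x. indicator {0..1} x / measure lborel {0..1::real})"
proof -
  assume i: "1 \<le> i"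
  have [measurable]: "\<eta> i \<in> borel_measurable M" using rv i by simp
  have "distributed M lborel (\<lambda>\<omega>. exp (\<eta> i \<omega>)) (\<lambda>x. indicator {0..1} x / measure lborel {0..1::real})"
  proof (rule uniform_distrI_borel_atLeastAtMost)
    fix t :: real assume t: "0 \<le> t" "t \<le> 1"
    show "\<P>(x in M. exp (\<eta> i x) \<le> t) = (t - 0) / (1 - 0)"
    proof (cases "t = 0")
      case True
      have "{x \<in> space M. exp (\<eta> i x) \<le> t} = {}" using True by (auto simp: not_le)
      then show ?thesis using True by simp
    next
      case False
      then have tp: "0 < t" using t by simp
      have "{x \<in> space M. exp (\<eta> i x) \<le> t} = {x \<in> space M. \<eta> i x \<le> ln t}"
        using tp by (auto simp: ln_ge_iff[symmetric] ln_exp)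
      moreover have "ln t \<le> 0" using t tp by simp
      ultimately show ?thesis using cdf[OF i, of "ln t"] tp by simp
    qed
  qed simp_all
  then show ?thesis .
qed

lemma rok_other: "m \<noteq> Suc n \<Longrightarrow> rok x m t (Suc n) = rok x m t n"
  unfolding rok_def by auto

lemma rok_self: "rok x (Suc n) t (Suc n) = (Smax x n < exp (x (Suc n)) \<and> exp (x (Suc n)) \<le> t)"
  "rok x (Suc n) t n"
  unfolding rok_def by auto

lemma G_F: "y \<le> 1 \<Longrightarrow> G n y = measure M {\<omega>\<in>space M. F n (\<lambda>i. \<eta> i \<omega>) < y}"
  unfolding G_def F_def by (intro arg_cong[where f="measure M"]) auto

lemma nonrec:
  assumes "Suc n \<noteq> j" "Suc n \<noteq> k" "Suc n \<noteq> r" "0 \<le> y" "y \<le> 1"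
  shows "G (Suc n) y = G n y * y"
proof -
  have "G (Suc n) y = measure M {\<omega>\<in>space M. F n (\<lambda>i. \<eta> i \<omega>) < y \<and> exp (\<eta> (Suc n) \<omega>) < y}"
    unfolding G_def F_def Ev_def using assms
    by (intro arg_cong[where f="measure M"]) (auto simp: rok_other)
  also have "\<dots> = measure M {\<omega>\<in>space M. F n (\<lambda>i. \<eta> i \<omega>) < y} * y"
    by (rule nonrec_step[OF prob_space_axioms indep_step distU]) (use assms in auto)
  finally show ?thesis using G_F assms by simp
qed

lemma recst:
  assumes ev: "\<And>x. Ev x (Suc n) \<longleftrightarrow> Ev x n \<and> Smax x n < exp (x (Suc n)) \<and> exp (x (Suc n)) \<le> t"
    and t: "0 \<le> t" "t \<le> 1" and y: "0 \<le> y"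
    and gX: "\<And>v. 0 \<le> v \<Longrightarrow> v \<le> 1 \<Longrightarrow> G n v = g v"
    and gi: "(g has_integral A) {0..min t y}"
  shows "measure M {\<omega>\<in>space M. Ev (\<lambda>i. \<eta> i \<omega>) (Suc n) \<and> exp (\<eta> (Suc n) \<omega>) < y} = A"
proof -
  have "measure M {\<omega>\<in>space M. Ev (\<lambda>i. \<eta> i \<omega>) (Suc n) \<and> exp (\<eta> (Suc n) \<omega>) < y}
    = measure M {\<omega>\<in>space M. F n (\<lambda>i. \<eta> i \<omega>) < exp (\<eta> (Suc n) \<omega>) \<and> exp (\<eta> (Suc n) \<omega>) \<le> t \<and> exp (\<eta> (Suc n) \<omega>) < y}"
    unfolding F_def ev using t
    by (intro arg_cong[where f="measure M"]) auto
  also have "\<dots> = A"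
    by (rule rec_step[OF prob_space_axioms indep_step distU t y _ gi]) (use gX G_F in auto)
  finally show ?thesis .
qed

lemma G_rec:
  assumes ev: "\<And>x. Ev x (Suc n) \<longleftrightarrow> Ev x n \<and> Smax x n < exp (x (Suc n)) \<and> exp (x (Suc n)) \<le> t"
  shows "G (Suc n) y = measure M {\<omega>\<in>space M. Ev (\<lambda>i. \<eta> i \<omega>) (Suc n) \<and> exp (\<eta> (Suc n) \<omega>) < y}"
  unfolding G_def using ev by (intro arg_cong[where f="measure M"]) auto

lemma ev_j: "Suc n = j \<Longrightarrow> Ev x (Suc n) \<longleftrightarrow> Ev x n \<and> Smax x n < exp (x (Suc n)) \<and> exp (x (Suc n)) \<le> a"
  unfolding Ev_def using jkr by (auto simp: rok_other rok_self)
lemma ev_k: "Suc n = k \<Longrightarrow> Ev x (Suc n) \<longleftrightarrow> Ev x n \<and> Smax x n < exp (x (Suc n)) \<and> exp (x (Suc n)) \<le> b"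
  unfolding Ev_def using jkr by (auto simp: rok_other rok_self)
lemma ev_r: "Suc n = r \<Longrightarrow> Ev x (Suc n) \<longleftrightarrow> Ev x n \<and> Smax x n < exp (x (Suc n)) \<and> exp (x (Suc n)) \<le> c"
  unfolding Ev_def using jkr by (auto simp: rok_other rok_self)

end



context recsetup
begin

lemma G0: "0 \<le> y \<Longrightarrow> G 0 y = 1"
proof -
  assume "0 \<le> y"
  then have "{\<omega>\<in>space M. Ev (\<lambda>i. \<eta> i \<omega>) 0 \<and> Smax (\<lambda>i. \<eta> i \<omega>) 0 < y} = space M"
    using jkr by (auto simp: Ev_def rok_def)
  then show ?thesis unfolding G_def by (simp add: prob_space)
qed

lemma Gpre: "n < j \<Longrightarrow> 0 \<le> y \<Longrightarrow> y \<le> 1 \<Longrightarrow> G n y = y^n"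
proof (induction n)
  case 0 then show ?case by (simp add: G0)
next
  case (Suc n)
  then have "G (Suc n) y = G n y * y" using jkr by (intro nonrec) auto
  then show ?case using Suc by simp
qed

lemma Gj: "j \<le> n \<Longrightarrow> n < k \<Longrightarrow> 0 \<le> y \<Longrightarrow> y \<le> 1 \<Longrightarrow> G n y = min a y ^ j / j * y^(n-j)"
proof (induction n rule: dec_induct)
  case base
  obtain m where m: "j = Suc m" using jkr by (cases j) auto
  have "G (Suc m) y = measure M {\<omega>\<in>space M. Ev (\<lambda>i. \<eta> i \<omega>) (Suc m) \<and> exp (\<eta> (Suc m) \<omega>) < y}"
    by (rule G_rec[where t=a, OF ev_j]) (use m in simp)
  also have "\<dots> = (min a y ^ j - 0 ^ j) / j"
  proof (rule recst[where g="\<lambda>v. v^(j-1)"])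
    show "\<And>x. Ev x (Suc m) = (Ev x m \<and> Smax x m < exp (x (Suc m)) \<and> exp (x (Suc m)) \<le> a)"
      using m by (intro ev_j) simp
    show "\<And>v. 0 \<le> v \<Longrightarrow> v \<le> 1 \<Longrightarrow> G m v = v ^ (j - 1)" using m Gpre by simp
    show "((\<lambda>v. v ^ (j - 1)) has_integral (min a y ^ j - 0 ^ j) / j) {0..min a y}"
      using abc jkr base by (intro pint') auto
  qed (use abc base in auto)
  finally show ?case using m abc base by (simp add: zero_power)
next
  case (step n)
  then have "G (Suc n) y = G n y * y" using jkr by (intro nonrec) auto
  moreover have "y^(Suc n - j) = y^(n-j) * y" using step by (simp add: Suc_diff_le)
  ultimately show ?case using step by simp
qed

lemma Gk: "k \<le> n \<Longrightarrow> n < r \<Longrightarrow> 0 \<le> y \<Longrightarrow> y \<le> 1 \<Longrightarrow> G n y = H a j k (min b y) * y^(n-k)"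
proof (induction n rule: dec_induct)
  case base
  obtain m where m: "k = Suc m" using jkr by (cases k) auto
  have "G (Suc m) y = measure M {\<omega>\<in>space M. Ev (\<lambda>i. \<eta> i \<omega>) (Suc m) \<and> exp (\<eta> (Suc m) \<omega>) < y}"
    by (rule G_rec[where t=b, OF ev_k]) (use m in simp)
  also have "\<dots> = H a j k (min b y)"
  proof (rule recst[where g="\<lambda>v. min a v ^ j / j * v^(k-1-j)"])
    show "\<And>x. Ev x (Suc m) = (Ev x m \<and> Smax x m < exp (x (Suc m)) \<and> exp (x (Suc m)) \<le> b)"
      using m by (intro ev_k) simp
    show "\<And>v. 0 \<le> v \<Longrightarrow> v \<le> 1 \<Longrightarrow> G m v = min a v ^ j / j * v^(k-1-j)"
      using m Gj jkr by simp
    show "((\<lambda>v. min a v ^ j / j * v^(k-1-j)) has_integral H a j k (min b y)) {0..min b y}"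
      using abc jkr base by (intro Hint) auto
  qed (use abc base in auto)
  finally show ?case using m by simp
next
  case (step n)
  then have "G (Suc n) y = G n y * y" using jkr by (intro nonrec) auto
  moreover have "y^(Suc n - k) = y^(n-k) * y" using step by (simp add: Suc_diff_le)
  ultimately show ?case using step by simp
qed

lemma final: "measure M {\<omega>\<in>space M. Ev (\<lambda>i. \<eta> i \<omega>) r} = Fin j k r a b c"
proof -
  obtain m where m: "r = Suc m" using jkr by (cases r) auto
  have "measure M {\<omega>\<in>space M. Ev (\<lambda>i. \<eta> i \<omega>) r}
      = measure M {\<omega>\<in>space M. Ev (\<lambda>i. \<eta> i \<omega>) (Suc m) \<and> exp (\<eta> (Suc m) \<omega>) < 2}"
    using m abc ev_r[of m] by (intro arg_cong[where f="measure M"]) auto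
  also have "\<dots> = Fin j k r a b c"
  proof (rule recst[where g="\<lambda>v. H a j k (min b v) * v^(r-1-k)"])
    show "\<And>x. Ev x (Suc m) = (Ev x m \<and> Smax x m < exp (x (Suc m)) \<and> exp (x (Suc m)) \<le> c)"
      using m by (intro ev_r) simp
    show "\<And>v. 0 \<le> v \<Longrightarrow> v \<le> 1 \<Longrightarrow> G m v = H a j k (min b v) * v^(r-1-k)"
      using m Gk jkr by simp
    have "min c 2 = c" using abc by simp
    then show "((\<lambda>v. H a j k (min b v) * v^(r-1-k)) has_integral Fin j k r a b c) {0..min c 2}"
      using abc jkr Fint by simp
  qed (use abc in auto)
  finally show ?thesis .
qed

end



lemma alg:
  assumes "1 \<le> j" "j < k" "k < r" "0 < a" "a \<le> b"
  shows "Fin j k r a b c / Fin j k r 1 1 1 =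
     real k * real r / (real (k - j) * real (r - k)) *
      (a^j * (c^(r-k) * b^(k-j) - real (k - j) / real (r - j) * b^(r-j))
       - real j / real k * a^k * c^(r-k)
       + real j * real (k - j) / (real r * real (r - j)) * a^r)"
proof -
  obtain p q where pq: "k = j + p" "r = j + p + q" "0 < p" "0 < q"
    using assms by (metis add_diff_inverse_nat add_pos_nonneg le_add_diff_inverse nat_less_le not_less zero_less_diff less_imp_le)
  have F1: "Fin j k r 1 1 1 = 1/(j*k*r)" unfolding Fin_def H_def using assms by simp
  have Hb: "H a j k b = a^k/(j*k) + a^j*(b^(k-j) - a^(k-j))/(j*(k-j))" using assms by (intro H_ge) auto
  have d: "k - j = p" "r - k = q" "r - j = p + q" using pq by auto
  have nz: "real j \<noteq> 0" "real p \<noteq> 0" "real q \<noteq> 0" "real j + real p \<noteq> 0" "real p + real q \<noteq> 0"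
     "real j + (real p + real q) \<noteq> 0" "real j + real p + real q \<noteq> 0"
    using pq assms by auto
  show ?thesis
    unfolding F1 Fin_def Hb d unfolding pq power_add
    using pq assms nz by (simp add: divide_simps) (simp add: algebra_simps)
qed



lemma Smax_lt: "Smax x n < e \<longleftrightarrow> (-1 < e \<and> (\<forall>i\<in>{1..n}. exp (x i) < e))"
  by (induction n) (auto simp: le_Suc_eq)

lemma rec_iff: "1 \<le> m \<Longrightarrow> is_record \<eta> m \<omega> \<longleftrightarrow> Smax (\<lambda>i. \<eta> i \<omega>) (m - 1) < exp (\<eta> m \<omega>)"
proof -
  assume m: "1 \<le> m"
  have "{1..<m} = {1..m-1}" using m by auto
  then show ?thesis unfolding is_record_def Smax_lt
    by (auto intro: less_trans[of "-1" 0])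
qed

lemma Smax_measM:
  assumes rv: "\<And>i. i \<ge> 1 \<Longrightarrow> \<eta> i \<in> borel_measurable M"
  shows "(\<lambda>\<omega>. Smax (\<lambda>i. \<eta> i \<omega>) m) \<in> borel_measurable M"
proof (induction m)
  case 0 then show ?case by simp
next
  case (Suc m)
  have [measurable]: "\<eta> (Suc m) \<in> borel_measurable M" using rv by simp
  note Suc[measurable]
  show ?case unfolding Smax.simps by measurable
qed

theorem mainTheorem12:
  fixes M :: "'a measure" and \<eta> :: "nat \<Rightarrow> 'a \<Rightarrow> real"
    and j k r :: nat and x1 x2 x3 :: real
  assumes "prob_space M"
    and rv: "\<And>i. i \<ge> 1 \<Longrightarrow> \<eta> i \<in> borel_measurable M"
    and indep: "prob_space.indep_vars M (\<lambda>_. borel) \<eta> {1..}"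
    and cdf: "\<And>i x. i \<ge> 1 \<Longrightarrow> x \<le> 0 \<Longrightarrow> measure M {\<omega> \<in> space M. \<eta> i \<omega> \<le> x} = exp x"
    and "1 \<le> j" "j < k" "k < r"
    and "x1 < x2" "x2 < x3" "x3 \<le> 0"
  shows "\<P>(\<omega> in M. \<eta> j \<omega> \<le> x1 \<and> \<eta> k \<omega> \<le> x2 \<and> \<eta> r \<omega> \<le> x3
            \<bar> is_record \<eta> j \<omega> \<and> is_record \<eta> k \<omega> \<and> is_record \<eta> r \<omega>)
    = real k * real r / (real (k - j) * real (r - k)) *
      (exp (real j * x1) * (exp (real (r - k) * x3) * exp (real (k - j) * x2)
            - real (k - j) / real (r - j) * exp (real (r - j) * x2))
       - real j / real k * exp (real k * x1) * exp (real (r - k) * x3)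
       + real j * real (k - j) / (real r * real (r - j)) * exp (real r * x1))"
proof -
  interpret prob_space M by fact
  interpret R1: recsetup M \<eta> j k r "exp x1" "exp x2" "exp x3"
    using assms by unfold_locales auto
  interpret R2: recsetup M \<eta> j k r 1 1 1
    using assms by unfold_locales auto
  have jkr: "1 \<le> j" "1 \<le> k" "1 \<le> r" "j \<le> r" "k \<le> r" "j \<le> k" using assms by auto
  note [measurable] = Smax_measM[OF rv]
  have rvm[measurable]: "\<eta> j \<in> borel_measurable M" "\<eta> k \<in> borel_measurable M" "\<eta> r \<in> borel_measurable M"
    using rv jkr by auto
  have num: "\<P>(\<omega> in M. (\<eta> j \<omega> \<le> x1 \<and> \<eta> k \<omega> \<le> x2 \<and> \<eta> r \<omega> \<le> x3)
            \<and> (is_record \<eta> j \<omega> \<and> is_record \<eta> k \<omega> \<and> is_record \<eta> r \<omega>))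
      = \<P>(\<omega> in M. R1.Ev (\<lambda>i. \<eta> i \<omega>) r)"
    using jkr by (intro arg_cong[where f="measure M"]) (auto simp: R1.Ev_def rok_def rec_iff)
  have ae0: "AE \<omega> in M. \<eta> i \<omega> \<le> 0" if "1 \<le> i" for i
  proof -
    have "prob {\<omega> \<in> space M. \<eta> i \<omega> \<le> 0} = 1" using cdf[OF that, of 0] by simp
    from AE_prob_1[OF this] show ?thesis by auto
  qed
  have den: "\<P>(\<omega> in M. is_record \<eta> j \<omega> \<and> is_record \<eta> k \<omega> \<and> is_record \<eta> r \<omega>)
      = \<P>(\<omega> in M. R2.Ev (\<lambda>i. \<eta> i \<omega>) r)"
  proof (rule prob_eq_AE)
    show "AE \<omega> in M. (is_record \<eta> j \<omega> \<and> is_record \<eta> k \<omega> \<and> is_record \<eta> r \<omega>) = R2.Ev (\<lambda>i. \<eta> i \<omega>) r"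
      using ae0[OF jkr(1)] ae0[OF jkr(2)] ae0[OF jkr(3)]
      by eventually_elim (use jkr in \<open>auto simp: R2.Ev_def rok_def rec_iff\<close>)
    have "{\<omega> \<in> space M. is_record \<eta> j \<omega> \<and> is_record \<eta> k \<omega> \<and> is_record \<eta> r \<omega>}
      = {\<omega> \<in> space M. Smax (\<lambda>i. \<eta> i \<omega>) (j - 1) < exp (\<eta> j \<omega>) \<and> Smax (\<lambda>i. \<eta> i \<omega>) (k - 1) < exp (\<eta> k \<omega>)
          \<and> Smax (\<lambda>i. \<eta> i \<omega>) (r - 1) < exp (\<eta> r \<omega>)}"
      using jkr by (auto simp: rec_iff)
    also have "\<dots> \<in> events" by measurable
    finally show "{\<omega> \<in> space M. is_record \<eta> j \<omega> \<and> is_record \<eta> k \<omega> \<and> is_record \<eta> r \<omega>} \<in> events" .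
    have "{\<omega> \<in> space M. R2.Ev (\<lambda>i. \<eta> i \<omega>) r}
      = {\<omega> \<in> space M. (Smax (\<lambda>i. \<eta> i \<omega>) (j - 1) < exp (\<eta> j \<omega>) \<and> exp (\<eta> j \<omega>) \<le> 1)
          \<and> (Smax (\<lambda>i. \<eta> i \<omega>) (k - 1) < exp (\<eta> k \<omega>) \<and> exp (\<eta> k \<omega>) \<le> 1)
          \<and> (Smax (\<lambda>i. \<eta> i \<omega>) (r - 1) < exp (\<eta> r \<omega>) \<and> exp (\<eta> r \<omega>) \<le> 1)}"
      using jkr by (auto simp: R2.Ev_def rok_def)
    also have "\<dots> \<in> events" by measurable
    finally show "{\<omega> \<in> space M. R2.Ev (\<lambda>i. \<eta> i \<omega>) r} \<in> events" .
  qed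
  have "\<P>(\<omega> in M. \<eta> j \<omega> \<le> x1 \<and> \<eta> k \<omega> \<le> x2 \<and> \<eta> r \<omega> \<le> x3
            \<bar> is_record \<eta> j \<omega> \<and> is_record \<eta> k \<omega> \<and> is_record \<eta> r \<omega>)
      = Fin j k r (exp x1) (exp x2) (exp x3) / Fin j k r 1 1 1"
    unfolding cond_prob_def num den R1.final R2.final ..
  also have "\<dots> = real k * real r / (real (k - j) * real (r - k)) *
      (exp x1^j * (exp x3^(r-k) * exp x2^(k-j) - real (k - j) / real (r - j) * exp x2^(r-j))
       - real j / real k * exp x1^k * exp x3^(r-k)
       + real j * real (k - j) / (real r * real (r - j)) * exp x1^r)"
    using assms by (intro alg) auto
  finally show ?thesis by (simp only: exp_of_nat_mult)
qed


end
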